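(* Let $X$ be a K3 surface with $\rho(X)=2$, let $a_1,b_1,c\in\mathbb N$, and let $\widetilde H\in N(X)$ be primitive with $\widetilde H^2=2a_1b_1c^2$ and $\widetilde H\cdot N(X)=\gamma\mathbb Z$ where $\gamma\mid 2a_1b_1$. Put $n=2a_1b_1c^2/\gamma$. Let $K(\widetilde H)=\widetilde H^\perp=\mathbb Zf(\widetilde H)$ in $N(X)$ and define $\delta$ by $\det N(X)=-\gamma\delta$. Then $\delta\in\mathbb N$, $f(\widetilde H)^2=-2a_1b_1c^2\delta/\gamma$, and there is $\mu$ coprime to $n$ with $\delta\equiv\mu^2\gamma\pmod{4a_1b_1c^2/\gamma}$ such that $$N(X)=\Big[\widetilde H,\ f(\widetilde H),\ \frac{\mu\widetilde H+f(\widetilde H)}{n}\Big]=\Big\{\frac{x\widetilde H+yf(\widetilde H)}{n}:\ x,y\in\mathbb Z,\ x\equiv\mu y\pmod n\Big\},$$ and for such $z=(x\widetilde H+yf(\widetilde H))/n$ one has $z^2=(\gamma x^2-\delta y^2)/n$. The class $\pm\mu\bmod n$ (the invariant of the pair $\widetilde H\in N(X)$) is independent of the sign of $f(\widetilde H)$ up to $\pm$. For any primitive $P\in N(X)$ with $P^2=2a_1b_1c^2$, $P\cdot N(X)=\gamma\mathbb Z$ and the same invariant $\pm\mu$, there is an isometry $\phi\in O(N(X))$ with $\phi(\widetilde H)=P$.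
   Context: $N(X)$ denotes the Picard lattice of the K3 surface $X$ (an even hyperbolic lattice of rank $\rho(X)$). For a primitive $P\in N(X)$ with $P^2=2a_1b_1c^2$ and $P\cdot N(X)=\gamma\mathbb Z$, its invariant is the class $\pm\mu_P\bmod n$ of an integer $\mu_P$ with $(\mu_PP+f(P))/n\in N(X)$, where $f(P)$ generates $P^\perp$ in $N(X)$. $O(N(X))$ is the isometry group of $N(X)$. *)

theory Defs
  imports "HOL-Number_Theory.Number_Theory"
begin

text \<open>A rank-2 lattice is modelled as \<open>\<int>\<^sup>2 = int \<times> int\<close> with an integral symmetric
bilinear form given by its Gram matrix \<open>[[p,q],[q,r]]\<close>, encoded as a triple \<open>(p,q,r)\<close>.\<close>

type_synonym vec = "int \<times> int"
type_synonym gram = "int \<times> int \<times> int"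

definition vadd :: "vec \<Rightarrow> vec \<Rightarrow> vec" where
  "vadd u v = (fst u + fst v, snd u + snd v)"

definition smul :: "int \<Rightarrow> vec \<Rightarrow> vec" where
  "smul k v = (k * fst v, k * snd v)"

definition bf :: "gram \<Rightarrow> vec \<Rightarrow> vec \<Rightarrow> int" where
  "bf G u v = (case G of (p, q, r) \<Rightarrow>
      p * fst u * fst v + q * (fst u * snd v + snd u * fst v) + r * snd u * snd v)"

definition gram_det :: "gram \<Rightarrow> int" where
  "gram_det G = (case G of (p, q, r) \<Rightarrow> p * r - q ^ 2)"

definition even_hyperbolic :: "gram \<Rightarrow> bool" where
  "even_hyperbolic G = (case G of (p, q, r) \<Rightarrow> even p \<and> even r \<and> p * r - q ^ 2 < 0)"

definition primitive :: "vec \<Rightarrow> bool" where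
  "primitive v = (gcd (fst v) (snd v) = 1)"

definition perp_generator :: "gram \<Rightarrow> vec \<Rightarrow> vec \<Rightarrow> bool" where
  "perp_generator G H f = (bf G H f = 0 \<and> (\<forall>v. bf G H v = 0 \<longrightarrow> (\<exists>k. v = smul k f)))"

definition pairing_ideal :: "gram \<Rightarrow> vec \<Rightarrow> int \<Rightarrow> bool" where
  "pairing_ideal G H \<gamma> = (range (bf G H) = {\<gamma> * k | k. True})"

definition invariant_rep :: "gram \<Rightarrow> int \<Rightarrow> vec \<Rightarrow> vec \<Rightarrow> int \<Rightarrow> bool" where
  "invariant_rep G n P f \<mu> =
     (perp_generator G P f \<and> (\<exists>w. smul n w = vadd (smul \<mu> P) f))"

definition isometry :: "gram \<Rightarrow> (vec \<Rightarrow> vec) \<Rightarrow> bool" where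
  "isometry G \<phi> = ((\<forall>u v. \<phi> (vadd u v) = vadd (\<phi> u) (\<phi> v)) \<and> bij \<phi> \<and>
                    (\<forall>u v. bf G (\<phi> u) (\<phi> v) = bf G u v))"

end

theory Submission
  imports Defs
begin


lemma bf_comb:
  "bf G (vadd (smul i X) (smul j Y)) (vadd (smul k X) (smul l Y)) =
   i*k*bf G X X + (i*l + j*k)*bf G X Y + j*l*bf G Y Y"
  by (cases G) (simp add: bf_def vadd_def smul_def algebra_simps)

lemma bf_sym: "bf G u v = bf G v u"
  by (cases G) (simp add: bf_def algebra_simps)

lemma bf_smul_r: "bf G u (smul k v) = k * bf G u v"
  by (cases G) (simp add: bf_def smul_def algebra_simps)

lemma bf_vadd_r: "bf G u (vadd v w) = bf G u v + bf G u w"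
  by (cases G) (simp add: bf_def vadd_def algebra_simps)

lemma bf_smul_l: "bf G (smul k v) u = k * bf G v u"
  by (cases G) (simp add: bf_def smul_def algebra_simps)

lemma bf_vadd_l: "bf G (vadd v w) u = bf G v u + bf G w u"
  by (cases G) (simp add: bf_def vadd_def algebra_simps)

lemma det_comb:
  "bf G X X * bf G Y Y - (bf G X Y)^2 = gram_det G * (fst X * snd Y - snd X * fst Y)^2"
  by (cases G) (simp add: bf_def gram_det_def power2_eq_square algebra_simps)

lemma decomp:
  assumes "fst X * snd Y - snd X * fst Y = 1"
  shows "v = vadd (smul (fst v * snd Y - snd v * fst Y) X) (smul (fst X * snd v - snd X * fst v) Y)"
proof -
  have "fst v = (fst v * snd Y - snd v * fst Y) * fst X + (fst X * snd v - snd X * fst v) * fst Y"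
  proof -
    have "(fst v * snd Y - snd v * fst Y) * fst X + (fst X * snd v - snd X * fst v) * fst Y = fst v * (fst X * snd Y - snd X * fst Y)"
      by (simp add: algebra_simps)
    then show ?thesis using assms by simp
  qed
  moreover have "snd v = (fst v * snd Y - snd v * fst Y) * snd X + (fst X * snd v - snd X * fst v) * snd Y"
  proof -
    have "(fst v * snd Y - snd v * fst Y) * snd X + (fst X * snd v - snd X * fst v) * snd Y = snd v * (fst X * snd Y - snd X * fst Y)"
      by (simp add: algebra_simps)
    then show ?thesis using assms by simp
  qed
  ultimately show ?thesis by (simp add: vadd_def smul_def prod_eq_iff)
qed

lemma uniq:
  assumes "fst X * snd Y - snd X * fst Y \<noteq> 0"
    and "vadd (smul i X) (smul j Y) = vadd (smul i' X) (smul j' Y)"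
  shows "i = i' \<and> j = j'"
proof -
  have e1: "(i - i') * fst X + (j - j') * fst Y = 0" and e2: "(i - i') * snd X + (j - j') * snd Y = 0"
    using assms(2) by (auto simp: vadd_def smul_def prod_eq_iff algebra_simps)
  have "(i - i') * (fst X * snd Y - snd X * fst Y) = 0"
  proof -
    have "(i - i') * (fst X * snd Y - snd X * fst Y) = snd Y * ((i - i') * fst X + (j - j') * fst Y) - fst Y * ((i - i') * snd X + (j - j') * snd Y)"
      by (simp add: algebra_simps)
    then show ?thesis using e1 e2 by simp
  qed
  moreover have "(j - j') * (fst X * snd Y - snd X * fst Y) = 0"
  proof -
    have "(j - j') * (fst X * snd Y - snd X * fst Y) = fst X * ((i - i') * snd X + (j - j') * snd Y) - snd X * ((i - i') * fst X + (j - j') * fst Y)"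
      by (simp add: algebra_simps)
    then show ?thesis using e1 e2 by simp
  qed
  ultimately show ?thesis using assms(1) by simp
qed

lemma bezout_basis:
  assumes "primitive X" shows "\<exists>Y. fst X * snd Y - snd X * fst Y = 1"
proof -
  obtain u v where "u * fst X + v * snd X = 1"
    using bezout_int[of "fst X" "snd X"] assms by (auto simp: primitive_def)
  then show ?thesis by (intro exI[of _ "(-v, u)"]) (simp add: algebra_simps)
qed

lemma bf_even: "even_hyperbolic G \<Longrightarrow> even (bf G v v)"
  by (cases G) (auto simp: even_hyperbolic_def bf_def)



lemma local_struct:
  assumes det1: "fst X * snd Y - snd X * fst Y = 1"
    and hX: "bf G X X = \<gamma> * n" and npos: "n > 0" and gpos: "\<gamma> > 0"
    and ideal: "pairing_ideal G X \<gamma>"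
  shows "\<exists>m. bf G X Y = \<gamma> * m \<and> coprime m n \<and>
     (\<forall>f. perp_generator G X f \<longrightarrow> (\<exists>\<sigma>. (\<sigma> = 1 \<or> \<sigma> = -1) \<and> f = smul \<sigma> (vadd (smul (-m) X) (smul n Y)))) \<and>
     (\<forall>f \<mu>. invariant_rep G n X f \<mu> \<longrightarrow> (\<exists>\<sigma>. (\<sigma> = 1 \<or> \<sigma> = -1) \<and> [\<mu> = \<sigma> * m] (mod n)))"
proof -
  have R: "range (bf G X) = {\<gamma> * k | k. True}" using ideal by (simp add: pairing_ideal_def)
  have "bf G X Y \<in> range (bf G X)" by simp
  then obtain m where m: "bf G X Y = \<gamma> * m" using R by auto
  have "\<gamma> * 1 \<in> range (bf G X)" using R by blast
  then obtain v where v: "bf G X v = \<gamma>" by auto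
  define i where "i = fst v * snd Y - snd v * fst Y"
  define j where "j = fst X * snd v - snd X * fst v"
  have vd: "v = vadd (smul i X) (smul j Y)" unfolding i_def j_def by (rule decomp[OF det1])
  have "bf G X v = i * bf G X X + j * bf G X Y"
    by (subst vd) (simp add: bf_vadd_r bf_smul_r)
  hence "\<gamma> * (i * n + j * m) = \<gamma> * 1" using v hX m by (simp add: algebra_simps)
  hence bez: "i * n + j * m = 1" using gpos by simp
  have cop: "coprime m n"
  proof (rule coprimeI)
    fix c assume "c dvd m" "c dvd n"
    hence "c dvd i * n + j * m" by simp
    thus "is_unit c" using bez by simp
  qed
  define f0 where "f0 = vadd (smul (-m) X) (smul n Y)"
  have bf0: "bf G X f0 = 0" unfolding f0_def
    by (simp add: bf_vadd_r bf_smul_r hX m algebra_simps)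
  have PG: "\<exists>\<sigma>. (\<sigma> = 1 \<or> \<sigma> = -1) \<and> f = smul \<sigma> f0" if pg: "perp_generator G X f" for f
  proof -
    obtain k where k: "f0 = smul k f" using pg bf0 unfolding perp_generator_def by blast
    define i' where "i' = fst f * snd Y - snd f * fst Y"
    define j' where "j' = fst X * snd f - snd X * fst f"
    have fd: "f = vadd (smul i' X) (smul j' Y)" unfolding i'_def j'_def by (rule decomp[OF det1])
    have "vadd (smul (-m) X) (smul n Y) = vadd (smul (k*i') X) (smul (k*j') Y)"
      using k fd unfolding f0_def by (simp add: vadd_def smul_def algebra_simps)
    from uniq[OF _ this] det1 have mi: "-m = k*i'" and nj: "n = k*j'" by auto
    have "k * (j * (-i') + i * j') = j * (-m) * (-1) + i * n" unfolding mi nj by (simp add: algebra_simps)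
    hence "k * (j * (-i') + i * j') = 1" using bez by (simp add: algebra_simps)
    hence ks: "k = 1 \<or> k = -1" by (auto simp add: zmult_eq_1_iff)
    have "f = smul k f0" using k ks by (auto simp: smul_def)
    thus ?thesis using ks by blast
  qed
  have "\<exists>\<sigma>. (\<sigma> = 1 \<or> \<sigma> = -1) \<and> [\<mu> = \<sigma> * m] (mod n)" if ir: "invariant_rep G n X f \<mu>" for f \<mu>
  proof -
    from ir obtain w where w: "smul n w = vadd (smul \<mu> X) f" and pg: "perp_generator G X f"
      unfolding invariant_rep_def by blast
    obtain \<sigma> where s: "\<sigma> = 1 \<or> \<sigma> = -1" "f = smul \<sigma> f0" using PG[OF pg] by blast
    define i' where "i' = fst w * snd Y - snd w * fst Y"
    define j' where "j' = fst X * snd w - snd X * fst w"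
    have wd: "w = vadd (smul i' X) (smul j' Y)" unfolding i'_def j'_def by (rule decomp[OF det1])
    have "vadd (smul (n*i') X) (smul (n*j') Y) = vadd (smul (\<mu> - \<sigma>*m) X) (smul (\<sigma>*n) Y)"
      using w s(2) wd unfolding f0_def by (simp add: vadd_def smul_def algebra_simps)
    from uniq[OF _ this] det1 have "n*i' = \<mu> - \<sigma>*m" by auto
    hence "[\<mu> = \<sigma> * m] (mod n)" by (simp add: cong_iff_dvd_diff) (metis dvd_triv_left)
    thus ?thesis using s(1) by blast
  qed
  thus ?thesis using m cop PG unfolding f0_def by blast
qed



lemma decomp_gen:
  assumes "(fst X * snd Y - snd X * fst Y) * d = 1"
  shows "v = vadd (smul (d * (fst v * snd Y - snd v * fst Y)) X) (smul (d * (fst X * snd v - snd X * fst v)) Y)"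
proof -
  have "fst v = d * (fst v * snd Y - snd v * fst Y) * fst X + d * (fst X * snd v - snd X * fst v) * fst Y"
  proof -
    have "d * (fst v * snd Y - snd v * fst Y) * fst X + d * (fst X * snd v - snd X * fst v) * fst Y = fst v * ((fst X * snd Y - snd X * fst Y) * d)"
      by (simp add: algebra_simps)
    then show ?thesis using assms by simp
  qed
  moreover have "snd v = d * (fst v * snd Y - snd v * fst Y) * snd X + d * (fst X * snd v - snd X * fst v) * snd Y"
  proof -
    have "d * (fst v * snd Y - snd v * fst Y) * snd X + d * (fst X * snd v - snd X * fst v) * snd Y = snd v * ((fst X * snd Y - snd X * fst Y) * d)"
      by (simp add: algebra_simps)
    then show ?thesis using assms by simp
  qed
  ultimately show ?thesis by (simp add: vadd_def smul_def prod_eq_iff)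
qed

lemma coord1:
  assumes "(fst X * snd Y - snd X * fst Y) * d = 1"
  shows "d * (fst (vadd (smul i X) (smul j Y)) * snd Y - snd (vadd (smul i X) (smul j Y)) * fst Y) = i"
proof -
  have "d * (fst (vadd (smul i X) (smul j Y)) * snd Y - snd (vadd (smul i X) (smul j Y)) * fst Y) = i * ((fst X * snd Y - snd X * fst Y) * d)"
    by (simp add: vadd_def smul_def algebra_simps)
  thus ?thesis using assms by simp
qed

lemma coord2:
  assumes "(fst X * snd Y - snd X * fst Y) * d = 1"
  shows "d * (fst X * snd (vadd (smul i X) (smul j Y)) - snd X * fst (vadd (smul i X) (smul j Y))) = j"
proof -
  have "d * (fst X * snd (vadd (smul i X) (smul j Y)) - snd X * fst (vadd (smul i X) (smul j Y))) = j * ((fst X * snd Y - snd X * fst Y) * d)"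
    by (simp add: vadd_def smul_def algebra_simps)
  thus ?thesis using assms by simp
qed

lemma sign_comb:
  fixes x a b s s2 n :: int
  assumes "[x = s*a] (mod n)" "[x = s2*b] (mod n)" "s = 1 \<or> s = -1" "s2 = 1 \<or> s2 = -1"
  shows "n dvd a - (s*s2)*b"
proof -
  have d: "n dvd (x - s2*b) - (x - s*a)" using assms(1,2) unfolding cong_iff_dvd_diff by (rule dvd_diff[rotated])
  have "a - (s*s2)*b = s*((x - s2*b) - (x - s*a))" using assms(3) by (auto simp: algebra_simps)
  thus ?thesis using d by (metis dvd_mult)
qed

lemma sign_cong:
  fixes a b m s s' n :: int
  assumes "[a = s*m] (mod n)" "[b = s'*m] (mod n)" "s = 1 \<or> s = -1" "s' = 1 \<or> s' = -1"
  shows "[b = a] (mod n) \<or> [b = - a] (mod n)"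
proof -
  have d1: "n dvd a - s*m" "n dvd b - s'*m" using assms(1,2) by (simp_all add: cong_iff_dvd_diff)
  have "b - (s*s')*a = (b - s'*m) - (s*s')*(a - s*m)" using assms(3) by (auto simp: algebra_simps)
  hence "n dvd b - (s*s')*a" using d1 by (metis dvd_diff dvd_mult)
  thus ?thesis using assms(3,4) by (auto simp: cong_iff_dvd_diff)
qed



theorem proposition3p1p1:
  fixes G :: gram and a1 b1 c \<gamma> :: int and H f :: vec
  assumes hyp: "even_hyperbolic G"
    and pos: "a1 > 0" "b1 > 0" "c > 0" "\<gamma> > 0"
    and prim: "primitive H"
    and sq: "bf G H H = 2 * a1 * b1 * c ^ 2"
    and ideal: "pairing_ideal G H \<gamma>"
    and gdvd: "\<gamma> dvd 2 * a1 * b1"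
    and fgen: "perp_generator G H f"
  shows
   "let n = 2 * a1 * b1 * c ^ 2 div \<gamma>; \<delta> = - gram_det G div \<gamma> in
      \<gamma> dvd gram_det G \<and> \<delta> > 0 \<and>
      bf G f f = - (2 * a1 * b1 * c ^ 2 * \<delta>) div \<gamma> \<and>
      \<gamma> * bf G f f = - (2 * a1 * b1 * c ^ 2 * \<delta>) \<and>
      (\<exists>\<mu>. coprime \<mu> n \<and> [\<delta> = \<mu> ^ 2 * \<gamma>] (mod (4 * a1 * b1 * c ^ 2 div \<gamma>)) \<and>
         (\<exists>w. smul n w = vadd (smul \<mu> H) f \<and>
              (\<forall>v. \<exists>i j k. v = vadd (vadd (smul i H) (smul j f)) (smul k w))) \<and>
         UNIV = {v. \<exists>x y. smul n v = vadd (smul x H) (smul y f) \<and> [x = \<mu> * y] (mod n)} \<and>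
         (\<forall>z x y. smul n z = vadd (smul x H) (smul y f) \<longrightarrow>
              n * bf G z z = \<gamma> * x ^ 2 - \<delta> * y ^ 2) \<and>
         (\<forall>P. primitive P \<and> bf G P P = 2 * a1 * b1 * c ^ 2 \<and> pairing_ideal G P \<gamma> \<and>
              (\<exists>fP \<mu>P. invariant_rep G n P fP \<mu>P \<and>
                  ([\<mu>P = \<mu>] (mod n) \<or> [\<mu>P = - \<mu>] (mod n)))
            \<longrightarrow> (\<exists>\<phi>. isometry G \<phi> \<and> \<phi> H = P))) \<and>
      (\<forall>f1 f2 \<mu>1 \<mu>2. invariant_rep G n H f1 \<mu>1 \<and> invariant_rep G n H f2 \<mu>2 \<longrightarrow>
          [\<mu>2 = \<mu>1] (mod n) \<or> [\<mu>2 = - \<mu>1] (mod n))"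
proof -
  define h where "h = 2 * a1 * b1 * c ^ 2"
  have hpos: "h > 0" unfolding h_def using pos by simp
  have "\<gamma> dvd h" unfolding h_def using gdvd by simp
  then obtain n where hn: "h = \<gamma> * n" by (auto simp: dvd_def)
  have npos: "n > 0" using hpos hn pos(4) by (simp add: zero_less_mult_iff)
  have n_eq: "2 * a1 * b1 * c ^ 2 div \<gamma> = n" using hn pos(4) unfolding h_def by simp
  have four: "4 * a1 * b1 * c ^ 2 div \<gamma> = 2 * n"
  proof -
    have X: "4 * a1 * b1 * c ^ 2 = \<gamma> * (2 * n)" using hn unfolding h_def by simp
    show ?thesis unfolding X using pos(4) by simp
  qed
  obtain Y where det1: "fst H * snd Y - snd H * fst Y = 1" using bezout_basis[OF prim] by blast
  have hH: "bf G H H = \<gamma> * n" using sq hn h_def by simp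
  obtain m where tm: "bf G H Y = \<gamma> * m" and cop: "coprime m n"
    and PG: "\<And>f. perp_generator G H f \<Longrightarrow> (\<exists>\<sigma>. (\<sigma> = 1 \<or> \<sigma> = -1) \<and> f = smul \<sigma> (vadd (smul (-m) H) (smul n Y)))"
    and INV: "\<And>f \<mu>. invariant_rep G n H f \<mu> \<Longrightarrow> (\<exists>\<sigma>. (\<sigma> = 1 \<or> \<sigma> = -1) \<and> [\<mu> = \<sigma> * m] (mod n))"
    using local_struct[OF det1 hH npos pos(4) ideal] by blast
  obtain \<sigma> where sig: "\<sigma> = 1 \<or> \<sigma> = -1" and fdef: "f = smul \<sigma> (vadd (smul (-m) H) (smul n Y))"
    using PG[OF fgen] by blast
  have ss: "\<sigma> * \<sigma> = 1" using sig by auto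
  have ss': "\<sigma> * (\<sigma> * x) = x" for x using ss by (metis mult.assoc mult_1)
  define s where "s = bf G Y Y"
  have detG: "gram_det G = \<gamma> * (n * s - \<gamma> * m ^ 2)"
  proof -
    have "bf G H H * bf G Y Y - (bf G H Y)^2 = gram_det G" using det_comb[of G H Y] unfolding det1 by simp
    thus ?thesis unfolding hH tm s_def by (simp add: power2_eq_square algebra_simps)
  qed
  define \<delta> where "\<delta> = \<gamma> * m ^ 2 - n * s"
  have d_eq: "- gram_det G div \<gamma> = \<delta>"
  proof -
    have X: "- gram_det G = \<gamma> * \<delta>" unfolding detG \<delta>_def by (simp add: algebra_simps)
    show ?thesis unfolding X using pos(4) by simp
  qed
  have gdv: "\<gamma> dvd gram_det G" using detG by simp
  have "gram_det G < 0" using hyp by (cases G) (simp add: even_hyperbolic_def gram_det_def)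
  hence dpos: "\<delta> > 0" using detG pos(4) unfolding \<delta>_def by (simp add: mult_less_0_iff)
  have "even s" unfolding s_def by (rule bf_even[OF hyp])
  then obtain s2 where s2: "s = 2 * s2" by blast
  have ff: "bf G f f = - (n * \<delta>)"
  proof -
    have "bf G f f = \<sigma> * \<sigma> * bf G (vadd (smul (-m) H) (smul n Y)) (vadd (smul (-m) H) (smul n Y))"
      unfolding fdef by (simp add: bf_smul_l bf_smul_r)
    also have "\<dots> = (-m)*(-m)*(\<gamma> * n) + ((-m)*n + n*(-m))*(\<gamma> * m) + n*n*s"
      unfolding bf_comb ss hH tm s_def by simp
    also have "\<dots> = - (n * \<delta>)" unfolding \<delta>_def by (simp add: power2_eq_square algebra_simps)
    finally show ?thesis .
  qed
  have c1: "bf G f f = - (2 * a1 * b1 * c ^ 2 * \<delta>) div \<gamma>"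
  proof -
    have X: "- (2 * a1 * b1 * c ^ 2 * \<delta>) = \<gamma> * (- (n * \<delta>))" using hn h_def by simp
    show ?thesis unfolding X ff using pos(4) by (metis less_irrefl nonzero_mult_div_cancel_left)
  qed
  have c2: "\<gamma> * bf G f f = - (2 * a1 * b1 * c ^ 2 * \<delta>)" using ff hn h_def by simp
  define \<mu> where "\<mu> = \<sigma> * m"
  have copm: "coprime \<mu> n" unfolding \<mu>_def using cop sig by auto
  have congd: "[\<delta> = \<mu> ^ 2 * \<gamma>] (mod (2 * n))"
  proof -
    have "\<delta> - \<mu> ^ 2 * \<gamma> = (2 * n) * (- s2)" unfolding \<delta>_def \<mu>_def s2
      using ss by (simp add: power2_eq_square algebra_simps)
    thus ?thesis unfolding cong_iff_dvd_diff by (metis dvd_triv_left)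
  qed
  have wpart: "\<exists>w. smul n w = vadd (smul \<mu> H) f \<and>
              (\<forall>v. \<exists>i j k. v = vadd (vadd (smul i H) (smul j f)) (smul k w))"
  proof (intro exI[of _ "smul \<sigma> Y"] conjI allI)
    show "smul n (smul \<sigma> Y) = vadd (smul \<mu> H) f"
      unfolding fdef \<mu>_def by (simp add: smul_def vadd_def algebra_simps)
    fix v
    have vd: "v = vadd (smul (fst v * snd Y - snd v * fst Y) H) (smul (fst H * snd v - snd H * fst v) Y)"
      by (rule decomp[OF det1])
    show "\<exists>i j k. v = vadd (vadd (smul i H) (smul j f)) (smul k (smul \<sigma> Y))"
    proof (intro exI)
      show "v = vadd (vadd (smul (fst v * snd Y - snd v * fst Y) H) (smul 0 f)) (smul (\<sigma> * (fst H * snd v - snd H * fst v)) (smul \<sigma> Y))"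
      proof -
        have k: "\<sigma> * (fst H * snd v - snd H * fst v) * \<sigma> = fst H * snd v - snd H * fst v"
          using ss by (metis mult.commute mult.left_commute mult_1_right)
        have "smul (\<sigma> * (fst H * snd v - snd H * fst v)) (smul \<sigma> Y) = smul (fst H * snd v - snd H * fst v) Y"
          using k by (simp add: smul_def mult.assoc[symmetric])
        thus ?thesis apply (subst vd) by (simp add: smul_def vadd_def)
      qed
    qed
  qed
  have upart: "UNIV = {v. \<exists>x y. smul n v = vadd (smul x H) (smul y f) \<and> [x = \<mu> * y] (mod n)}"
  proof -
   have "\<exists>x y. smul n v = vadd (smul x H) (smul y f) \<and> [x = \<mu> * y] (mod n)" for v
   proof -
    define i where "i = fst v * snd Y - snd v * fst Y"
    define j where "j = fst H * snd v - snd H * fst v"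
    have vd: "v = vadd (smul i H) (smul j Y)" unfolding i_def j_def by (rule decomp[OF det1])
    have e: "smul n v = vadd (smul (n * i + j * m) H) (smul (\<sigma> * j) f)"
      apply (subst vd) unfolding fdef using ss by (simp add: smul_def vadd_def algebra_simps ss')
    have "[n * i + j * m = \<mu> * (\<sigma> * j)] (mod n)"
    proof -
      have X: "n * i + j * m - \<mu> * (\<sigma> * j) = n * i" unfolding \<mu>_def using ss by (simp add: algebra_simps ss')
      show ?thesis unfolding cong_iff_dvd_diff X by simp
    qed
    thus "\<exists>x y. smul n v = vadd (smul x H) (smul y f) \<and> [x = \<mu> * y] (mod n)" using e by blast
   qed
   thus ?thesis by blast
  qed
  have zpart: "\<forall>z x y. smul n z = vadd (smul x H) (smul y f) \<longrightarrow> n * bf G z z = \<gamma> * x ^ 2 - \<delta> * y ^ 2"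
  proof (intro allI impI)
    fix z x y assume a: "smul n z = vadd (smul x H) (smul y f)"
    have Hf: "bf G H f = 0" using fgen by (simp add: perp_generator_def)
    have "n * (n * bf G z z) = bf G (smul n z) (smul n z)" by (simp add: bf_smul_l bf_smul_r)
    also have "\<dots> = x * x * (\<gamma> * n) + (x * y + y * x) * 0 + y * y * (- (n * \<delta>))"
      unfolding a bf_comb hH Hf ff by simp
    also have "\<dots> = n * (\<gamma> * x ^ 2 - \<delta> * y ^ 2)" by (simp add: power2_eq_square algebra_simps)
    finally show "n * bf G z z = \<gamma> * x ^ 2 - \<delta> * y ^ 2" using npos by simp
  qed
  have ppart: "\<forall>P. primitive P \<and> bf G P P = 2 * a1 * b1 * c ^ 2 \<and> pairing_ideal G P \<gamma> \<and>
              (\<exists>fP \<mu>P. invariant_rep G n P fP \<mu>P \<and>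
                  ([\<mu>P = \<mu>] (mod n) \<or> [\<mu>P = - \<mu>] (mod n)))
            \<longrightarrow> (\<exists>\<phi>. isometry G \<phi> \<and> \<phi> H = P)"
  proof (intro allI impI)
    fix P assume A: "primitive P \<and> bf G P P = 2 * a1 * b1 * c ^ 2 \<and> pairing_ideal G P \<gamma> \<and>
              (\<exists>fP \<mu>P. invariant_rep G n P fP \<mu>P \<and>
                  ([\<mu>P = \<mu>] (mod n) \<or> [\<mu>P = - \<mu>] (mod n)))"
    have hP: "bf G P P = \<gamma> * n" using A hn h_def by simp
    obtain fP \<mu>P where ir: "invariant_rep G n P fP \<mu>P" and cg: "[\<mu>P = \<mu>] (mod n) \<or> [\<mu>P = - \<mu>] (mod n)"
      using A by blast
    obtain Y' where det1': "fst P * snd Y' - snd P * fst Y' = 1" using bezout_basis A by blast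
    obtain m' where tm': "bf G P Y' = \<gamma> * m'"
      and INV': "\<And>f \<mu>. invariant_rep G n P f \<mu> \<Longrightarrow> (\<exists>\<sigma>. (\<sigma> = 1 \<or> \<sigma> = -1) \<and> [\<mu> = \<sigma> * m'] (mod n))"
      using local_struct[OF det1' hP npos pos(4)] A by blast
    obtain s1 where s1: "s1 = 1 \<or> s1 = -1" "[\<mu>P = s1 * m'] (mod n)" using INV'[OF ir] by blast
    obtain s2 where s2': "s2 = 1 \<or> s2 = -1" "[\<mu>P = s2 * m] (mod n)"
    proof (cases "[\<mu>P = \<mu>] (mod n)")
      case True then show ?thesis using that[of \<sigma>] sig unfolding \<mu>_def by blast
    next
      case False then have "[\<mu>P = (-\<sigma>) * m] (mod n)" using cg unfolding \<mu>_def by simp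
      then show ?thesis using that[of "-\<sigma>"] sig by auto
    qed
    define \<tau> where "\<tau> = s1 * s2"
    have tau: "\<tau> = 1 \<or> \<tau> = -1" unfolding \<tau>_def using s1(1) s2'(1) by auto
    have tt: "\<tau> * \<tau> = 1" using tau by auto
    have "n dvd m' - \<tau> * m" unfolding \<tau>_def by (rule sign_comb[OF s1(2) s2'(2) s1(1) s2'(1)])
    then obtain k where k: "m' - \<tau> * m = n * k" by (auto simp: dvd_def)
    define Y2 where "Y2 = smul \<tau> (vadd Y' (smul (-k) P))"
    have dY2: "fst P * snd Y2 - snd P * fst Y2 = \<tau> * (fst P * snd Y' - snd P * fst Y')"
      unfolding Y2_def by (simp add: smul_def vadd_def algebra_simps)
    have det2: "(fst P * snd Y2 - snd P * fst Y2) * \<tau> = 1" unfolding dY2 det1' using tt by simp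
    have det1o: "(fst H * snd Y - snd H * fst Y) * 1 = 1" using det1 by simp
    have tY: "bf G P Y2 = \<gamma> * m"
    proof -
      have "bf G P Y2 = \<tau> * (\<gamma> * m' - k * (\<gamma> * n))" unfolding Y2_def
        by (simp add: bf_smul_r bf_vadd_r hP tm')
      also have "\<dots> = \<tau> * \<gamma> * (m' - n * k)" by (simp add: algebra_simps)
      also have "\<dots> = \<tau> * \<gamma> * (\<tau> * m)" using k by (simp add: algebra_simps)
      also have "\<dots> = \<gamma> * m" using tt by (metis mult.assoc mult.commute mult_1_right)
      finally show ?thesis .
    qed
    have sY: "bf G Y2 Y2 = s"
    proof -
      have "bf G P P * bf G Y2 Y2 - (bf G P Y2)^2 = gram_det G * (fst P * snd Y2 - snd P * fst Y2)^2"
        by (rule det_comb)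
      also have "(fst P * snd Y2 - snd P * fst Y2)^2 = 1" unfolding dY2 det1' using tt by (simp add: power2_eq_square)
      finally have "\<gamma> * n * bf G Y2 Y2 - (\<gamma> * m)^2 = \<gamma> * (n * s - \<gamma> * m ^ 2)" unfolding hP tY detG by simp
      hence "(\<gamma> * n) * bf G Y2 Y2 = (\<gamma> * n) * s" by (simp add: power2_eq_square algebra_simps)
      thus ?thesis using npos pos(4) by simp
    qed
    define c1 where "c1 = (\<lambda>v::vec. fst v * snd Y - snd v * fst Y)"
    define c2 where "c2 = (\<lambda>v::vec. fst H * snd v - snd H * fst v)"
    define \<phi> where "\<phi> = (\<lambda>v. vadd (smul (c1 v) P) (smul (c2 v) Y2))"
    define \<psi> where "\<psi> = (\<lambda>u::vec. vadd (smul (\<tau> * (fst u * snd Y2 - snd u * fst Y2)) H) (smul (\<tau> * (fst P * snd u - snd P * fst u)) Y))"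
    have dec: "vadd (smul (c1 v) H) (smul (c2 v) Y) = v" for v
      unfolding c1_def c2_def using decomp[OF det1, of v] by simp
    have psiphi: "\<psi> (\<phi> v) = v" for v
      unfolding \<psi>_def \<phi>_def coord1[OF det2] coord2[OF det2] by (rule dec)
    have phipsi: "\<phi> (\<psi> u) = u" for u
    proof -
      have "c1 (\<psi> u) = \<tau> * (fst u * snd Y2 - snd u * fst Y2)"
        unfolding \<psi>_def c1_def using coord1[OF det1o] by simp
      moreover have "c2 (\<psi> u) = \<tau> * (fst P * snd u - snd P * fst u)"
        unfolding \<psi>_def c2_def using coord2[OF det1o] by simp
      ultimately show ?thesis unfolding \<phi>_def using decomp_gen[OF det2, of u] by simp
    qed
    have "bij \<phi>" unfolding bij_def inj_def surj_def using psiphi phipsi by metis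
    moreover have "\<forall>u v. \<phi> (vadd u v) = vadd (\<phi> u) (\<phi> v)"
      unfolding \<phi>_def c1_def c2_def by (simp add: vadd_def smul_def algebra_simps)
    moreover have "bf G (\<phi> u) (\<phi> v) = bf G u v" for u v
    proof -
      have "bf G (\<phi> u) (\<phi> v) = c1 u * c1 v * (\<gamma> * n) + (c1 u * c2 v + c2 u * c1 v) * (\<gamma> * m) + c2 u * c2 v * s"
        unfolding \<phi>_def bf_comb hP tY sY ..
      also have "\<dots> = bf G (vadd (smul (c1 u) H) (smul (c2 u) Y)) (vadd (smul (c1 v) H) (smul (c2 v) Y))"
        unfolding bf_comb hH tm s_def ..
      also have "\<dots> = bf G u v" unfolding dec ..
      finally show ?thesis .
    qed
    moreover have "\<phi> H = P" unfolding \<phi>_def c1_def c2_def using det1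
      by (simp add: vadd_def smul_def mult.commute)
    ultimately show "\<exists>\<phi>. isometry G \<phi> \<and> \<phi> H = P" unfolding isometry_def by blast
  qed
  have lpart: "\<forall>f1 f2 \<mu>1 \<mu>2. invariant_rep G n H f1 \<mu>1 \<and> invariant_rep G n H f2 \<mu>2 \<longrightarrow>
          [\<mu>2 = \<mu>1] (mod n) \<or> [\<mu>2 = - \<mu>1] (mod n)"
  proof (intro allI impI)
    fix f1 f2 \<mu>1 \<mu>2 assume "invariant_rep G n H f1 \<mu>1 \<and> invariant_rep G n H f2 \<mu>2"
    then obtain t1 t2 where tt: "t1 = 1 \<or> t1 = -1" "[\<mu>1 = t1 * m] (mod n)" "t2 = 1 \<or> t2 = -1" "[\<mu>2 = t2 * m] (mod n)"
      using INV by meson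
    show "[\<mu>2 = \<mu>1] (mod n) \<or> [\<mu>2 = - \<mu>1] (mod n)" by (rule sign_cong[OF tt(2) tt(4) tt(1) tt(3)])
  qed
  show ?thesis unfolding Let_def n_eq d_eq four
    using gdv dpos c1 c2 copm congd wpart upart zpart ppart lpart by blast
qed

end
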